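(* Let $X,Y,F,\hat A,y,u^\dagger,\rho,\nu,L_F,L_{\hat A},u_0$ satisfy the hypotheses of the noise-free convergence theorem stated in the context, and let $\bar u$ be the limit of the noise-free iteration $(u_k)$ (so $F(\bar u)=y$). Let $\delta_n\to0$, $y_n\in Y$ with $\|y_n-y\|\le\delta_n$, and let $(u^{\delta_n}_k)_k$ be generated from $u^{\delta_n}_0=u_0$ by $$u^{\delta_n}_{k+1}=u^{\delta_n}_k-F'(u^{\delta_n}_k)^*(F(u^{\delta_n}_k)-y_n)-\lambda^{\delta_n}_k\hat A'(u^{\delta_n}_k)^*(\hat A(u^{\delta_n}_k)-y_n),$$ where the step parameters are given by $\lambda^{\delta_n}_k=\varphi_k(u^{\delta_n}_k,y_n)$ and $\lambda_k=\varphi_k(u_k,y)$ for functions $\varphi_k:X\times Y\to[0,\infty)$ continuous at the relevant points. Let $\tau>0$ with $C_\tau:=1-L_F^2-\nu-\frac{1+\nu}{\tau}\ge0$, and assume that for all $n$ and all $k<k_n$ the conditions $\lambda^{\delta_n}_kL_{\hat A}C^{\delta_n}_{\hat A}\le\rho$, $\lambda^{\delta_n}_k\le C_\lambda\|F(u^{\delta_n}_k)-y_n\|^2$ hold, with $C^{\delta_n}_{\hat A}:=L_{\hat A}\rho+\|\hat A(u^\dagger)\|+\|y_n\|$ and a constant $C_\lambda>0$ with $C_\tau-2L_{\hat A}C^{\delta_n}_{\hat A}C_\lambda\rho>0$ for all $n$. Let $k_n=k_*(\delta_n,y_n)$ be the stopping index of the discrepancy principle, i.e. the first index with $\|F(u^{\delta_n}_{k_n})-y_n\|\le\tau\delta_n$.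 Then $u^{\delta_n}_{k_n}\to\bar u$ as $n\to\infty$; i.e. the discrepancy-stopped iteration converges to a solution of $F(u)=y$ as $\delta\to0$.
   Context: $\mathcal{B}_\rho(v)$ denotes the closed ball of radius $\rho$ centred at $v$; $X,Y$ real Hilbert spaces; $^*$ the Hilbert adjoint. Noise-free convergence theorem hypotheses: $F(u^\dagger)=y$; there is $\rho>0$ with $\mathcal{B}_\rho(u^\dagger)\subseteq\mathcal{B}_{2\rho}(u_0)$, $\mathcal B_\rho(u^\dagger)\subseteq\mathcal D(F)\cap\mathcal D(\hat A)$, $u_0\in\mathcal B_\rho(u^\dagger)$; $\|F(u)-F(\tilde u)-F'(u)(u-\tilde u)\|\le\nu\|F(u)-F(\tilde u)\|$ for all $u,\tilde u\in\mathcal B_\rho(u^\dagger)$ with $\nu>0$; $F,\hat A$ continuously Fréchet differentiable on $\mathcal B_\rho(u^\dagger)$ with $\|F'(u)\|\le L_F$, $\|\hat A'(u)\|\le L_{\hat A}$ there; $\|\hat A(u^\dagger)-y\|\ge C_N>0$; the noise-free iteration $u_{k+1}=u_k-F'(u_k)^*(F(u_k)-y)-\lambda_k\hat A'(u_k)^*(\hat A(u_k)-y)$ has $\lambda_kL_{\hat A}C^0_{\hat A}\le\rho$, $\lambda_k\le C^0_\lambda\|F(u_k)-y\|^2$ for all $k$, where $C^0_{\hat A}=L_{\hat A}\rho+\|\hat A(u^\dagger)\|+\|y\|$ and $1-\nu-L_F^2-2L_{\hat A}C^0_{\hat A}C^0_\lambda\rho>0$. Under these hypotheses the noise-free iterates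 converge to some $\bar u$ with $F(\bar u)=y$. *)

theory Defs
  imports "HOL-Analysis.Analysis"
begin

end

theory Submission
  imports Defs
begin

lemma riesz_rep:
  fixes g :: "'a::{real_inner,complete_space} \<Rightarrow> real"
  assumes bl: "bounded_linear g"
  shows "\<exists>v. \<forall>x. g x = v \<bullet> x"
proof -
  interpret g: bounded_linear g by fact
  obtain K where K: "K > 0" "\<And>x. norm (g x) \<le> norm x * K" using g.pos_bounded by blast
  define J where "J v = (v \<bullet> v) / 2 - g v" for v
  have Jlow: "J v \<ge> - (K^2) / 2" for v
  proof -
    have "g v \<le> norm v * K" using K(2)[of v] by simp
    moreover have "v \<bullet> v = (norm v)^2" by (simp add: power2_norm_eq_inner)
    moreover have "(norm v - K)^2 \<ge> 0" by simp
    ultimately show ?thesis unfolding J_def by (simp add: power2_eq_square algebra_simps)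
  qed
  define m where "m = Inf (range J)"
  have bdd: "bdd_below (range J)" using Jlow by (intro bdd_belowI2) auto
  have mle: "m \<le> J x" for x unfolding m_def by (rule cInf_lower[OF _ bdd]) auto
  have "\<forall>n. \<exists>v. J v < m + 1 / real (Suc n)"
  proof
    fix n
    have "m < m + 1 / real (Suc n)" by simp
    then show "\<exists>v. J v < m + 1 / real (Suc n)"
      unfolding m_def using cInf_less_iff[OF _ bdd, of "m + 1 / real (Suc n)"] m_def by auto
  qed
  then obtain v where v: "\<And>n. J (v n) < m + 1 / real (Suc n)" by metis
  have par: "(norm (v p - v q))^2 \<le> 4 * (1 / real (Suc p) + 1 / real (Suc q))" for p q
  proof -
    have "J ((1/2) *\<^sub>R (v p + v q)) \<ge> m" by (rule mle)
    moreover have "(norm (v p - v q))^2 / 4 = J (v p) + J (v q) - 2 * J ((1/2) *\<^sub>R (v p + v q))"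
      unfolding J_def power2_norm_eq_inner
      by (simp add: g.add g.scaleR inner_diff_left inner_diff_right inner_add_left inner_add_right
            inner_commute algebra_simps field_simps)
    ultimately have "(norm (v p - v q))^2 / 4 < 1 / real (Suc p) + 1 / real (Suc q)"
      using v[of p] v[of q] by linarith
    then show ?thesis by simp
  qed
  have "Cauchy v"
  proof (rule metric_CauchyI)
    fix e :: real assume e: "e > 0"
    obtain M :: nat where M: "8 / e^2 < real M" using reals_Archimedean2 by blast
    have M': "8 / real (Suc M) < e^2"
    proof -
      have "8 < e^2 * real M" using M e by (simp add: field_simps)
      also have "\<dots> \<le> e^2 * real (Suc M)" using e by simp
      finally show ?thesis by (simp add: field_simps)
    qed
    show "\<exists>M. \<forall>p\<ge>M. \<forall>q\<ge>M. dist (v p) (v q) < e"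
    proof (intro exI allI impI)
      fix p q assume pq: "M \<le> p" "M \<le> q"
      have "1 / real (Suc p) \<le> 1 / real (Suc M)" "1 / real (Suc q) \<le> 1 / real (Suc M)"
        using pq by (auto simp: field_simps)
      moreover have "8 / real (Suc M) = 8 * (1 / real (Suc M))" by simp
      ultimately have "(norm (v p - v q))^2 < e^2" using par[of p q] M'
        by (smt (verit))
      then have "norm (v p - v q) < e" using e by (simp add: power_less_imp_less_base)
      then show "dist (v p) (v q) < e" by (simp add: dist_norm)
    qed
  qed
  then obtain v0 where lim: "v \<longlonglongrightarrow> v0" using Cauchy_convergent convergent_def by blast
  have "(\<lambda>n. J (v n)) \<longlonglongrightarrow> J v0"
    unfolding J_def by (auto intro!: tendsto_intros g.tendsto lim)
  moreover have "(\<lambda>n. J (v n)) \<longlonglongrightarrow> m"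
  proof (rule tendsto_sandwich[of "\<lambda>n. m" _ _ "\<lambda>n. m + 1 / real (Suc n)"])
    show "\<forall>\<^sub>F n in sequentially. m \<le> J (v n)" using mle by simp
    show "\<forall>\<^sub>F n in sequentially. J (v n) \<le> m + 1 / real (Suc n)" using v less_imp_le by (intro always_eventually) blast
    show "(\<lambda>n. m) \<longlonglongrightarrow> m" by simp
    have "(\<lambda>n. 1 / real (Suc n)) \<longlonglongrightarrow> 0" using LIMSEQ_inverse_real_of_nat by (simp add: inverse_eq_divide)
    then show "(\<lambda>n. m + 1 / real (Suc n)) \<longlonglongrightarrow> m" using tendsto_add[of "\<lambda>n. m" m] by fastforce
  qed
  ultimately have Jv0: "J v0 = m" using LIMSEQ_unique by blast
  show ?thesis
  proof (intro exI allI)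
    fix x
    define c where "c = v0 \<bullet> x - g x"
    define q where "q = x \<bullet> x"
    have q0: "q \<ge> 0" unfolding q_def by simp
    define s where "s = 1 / (q + 1)"
    have s0: "s > 0" using q0 unfolding s_def by simp
    have sq: "s * q \<le> 1" using q0 unfolding s_def by (simp add: field_simps)
    have gen: "J (v0 + t *\<^sub>R x) - J v0 = t * c + t^2 * q / 2" for t
    proof -
      have "g (v0 + t *\<^sub>R x) = g v0 + t * g x" by (simp add: g.add g.scaleR)
      then show ?thesis unfolding J_def c_def q_def
        by (simp add: inner_add_left inner_add_right inner_commute power2_eq_square algebra_simps field_simps)
    qed
    have "J (v0 + (- c * s) *\<^sub>R x) - J v0 = (- c * s) * c + (- c * s)^2 * q / 2"
      by (rule gen)
    moreover have "J (v0 + (- c * s) *\<^sub>R x) - J v0 \<ge> 0" using mle Jv0 by simp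
    ultimately have h: "0 \<le> c^2 * s * (s * q / 2 - 1)" by (simp add: power2_eq_square algebra_simps)
    have "s * q / 2 - 1 < 0" using sq by simp
    then have "c^2 * s \<le> 0" using h s0 by (simp add: mult_le_0_iff zero_le_mult_iff)
    then have "c = 0" using s0 by (simp add: mult_le_0_iff)
    then show "g x = v0 \<bullet> x" unfolding c_def by simp
  qed
qed

lemma adjoint_hilbert:
  fixes f :: "'a::{real_inner,complete_space} \<Rightarrow> 'b::real_inner"
  assumes "bounded_linear f"
  shows "x \<bullet> adjoint f y = f x \<bullet> y"
proof -
  have "\<forall>y. \<exists>w. \<forall>x. f x \<bullet> y = x \<bullet> w"
  proof
    fix y
    have "bounded_linear (\<lambda>x. f x \<bullet> y)"
      using bounded_linear_compose[OF bounded_linear_inner_left assms] by simp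
    from riesz_rep[OF this] show "\<exists>w. \<forall>x. f x \<bullet> y = x \<bullet> w" by (metis inner_commute)
  qed
  then have "\<exists>f'. \<forall>x y. f x \<bullet> y = x \<bullet> f' y" by metis
  then have "\<forall>x y. f x \<bullet> y = x \<bullet> adjoint f y" unfolding adjoint_def by (rule someI_ex)
  then show ?thesis by simp
qed

lemma adj_inner:
  fixes T :: "'a::{real_inner,complete_space} \<Rightarrow>\<^sub>L 'b::real_inner"
  shows "x \<bullet> adjoint (blinfun_apply T) y = blinfun_apply T x \<bullet> y"
  by (rule adjoint_hilbert) (rule blinfun.bounded_linear_right)

lemma vec_eq_inner:
  fixes a b :: "'a::real_inner"
  assumes "\<And>x. x \<bullet> a = x \<bullet> b"
  shows "a = b"
proof -
  have "(a - b) \<bullet> (a - b) = 0" using assms[of "a - b"] by (simp add: inner_diff_right)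
  then show ?thesis by simp
qed

lemma adj_norm:
  fixes T :: "'a::{real_inner,complete_space} \<Rightarrow>\<^sub>L 'b::real_inner"
  shows "norm (adjoint (blinfun_apply T) y) \<le> norm T * norm y"
proof -
  let ?a = "adjoint (blinfun_apply T) y"
  have "(norm ?a)^2 = blinfun_apply T ?a \<bullet> y" by (simp add: power2_norm_eq_inner adj_inner)
  also have "\<dots> \<le> norm (blinfun_apply T ?a) * norm y" by (rule norm_cauchy_schwarz)
  also have "\<dots> \<le> norm T * norm ?a * norm y" by (simp add: mult_right_mono norm_blinfun)
  finally have "norm ?a * norm ?a \<le> (norm T * norm y) * norm ?a" by (simp add: power2_eq_square algebra_simps)
  then show ?thesis
    by (cases "norm ?a = 0") (auto simp: mult_le_cancel_right)
qed

lemma adj_bilinear: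
  "bounded_bilinear (\<lambda>(T::'a::{real_inner,complete_space} \<Rightarrow>\<^sub>L 'b::real_inner) y. adjoint (blinfun_apply T) y)"
proof
  fix a a' :: "'a \<Rightarrow>\<^sub>L 'b" and b b' :: 'b and r :: real
  show "adjoint (blinfun_apply (a + a')) b = adjoint (blinfun_apply a) b + adjoint (blinfun_apply a') b"
    by (rule vec_eq_inner) (simp add: adj_inner inner_add_right blinfun.add_left inner_add_left)
  show "adjoint (blinfun_apply a) (b + b') = adjoint (blinfun_apply a) b + adjoint (blinfun_apply a) b'"
    by (rule vec_eq_inner) (simp add: adj_inner inner_add_right)
  show "adjoint (blinfun_apply (r *\<^sub>R a)) b = r *\<^sub>R adjoint (blinfun_apply a) b"
    by (rule vec_eq_inner) (simp add: adj_inner blinfun.scaleR_left)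
  show "adjoint (blinfun_apply a) (r *\<^sub>R b) = r *\<^sub>R adjoint (blinfun_apply a) b"
    by (rule vec_eq_inner) (simp add: adj_inner)
next
  show "\<exists>K. \<forall>a b. norm (adjoint (blinfun_apply (a::'a \<Rightarrow>\<^sub>L 'b)) b) \<le> norm a * norm b * K"
    by (rule exI[of _ 1]) (simp add: adj_norm)
qed


locale setting =
  fixes F Ahat :: "'a::{real_inner,complete_space} \<Rightarrow> 'b::{real_inner,complete_space}"
    and F' Ahat' :: "'a \<Rightarrow> ('a \<Rightarrow>\<^sub>L 'b)"
    and y :: 'b and udag u0 ubar :: 'a
    and \<rho> \<nu> L_F L_A C_N C0_lam :: real
    and \<phi> :: "nat \<Rightarrow> 'a \<Rightarrow> 'b \<Rightarrow> real"
    and u :: "nat \<Rightarrow> 'a"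
    and \<delta> :: "nat \<Rightarrow> real" and yn :: "nat \<Rightarrow> 'b"
    and ud :: "nat \<Rightarrow> nat \<Rightarrow> 'a"
    and kn :: "nat \<Rightarrow> nat"
    and \<tau> C_lam :: real
  assumes sol: "F udag = y"
    and rho_pos: "\<rho> > 0"
    and balls: "cball udag \<rho> \<subseteq> cball u0 (2 * \<rho>)"
    and u0_in: "u0 \<in> cball udag \<rho>"
    and nu_pos: "\<nu> > 0"
    and tcc: "\<And>v w. v \<in> cball udag \<rho> \<Longrightarrow> w \<in> cball udag \<rho> \<Longrightarrow>
               norm (F v - F w - blinfun_apply (F' v) (v - w)) \<le> \<nu> * norm (F v - F w)"
    and F_deriv: "\<And>v. v \<in> cball udag \<rho> \<Longrightarrow>
               (F has_derivative blinfun_apply (F' v)) (at v within cball udag \<rho>)"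
    and A_deriv: "\<And>v. v \<in> cball udag \<rho> \<Longrightarrow>
               (Ahat has_derivative blinfun_apply (Ahat' v)) (at v within cball udag \<rho>)"
    and F'_cont: "continuous_on (cball udag \<rho>) F'"
    and A'_cont: "continuous_on (cball udag \<rho>) Ahat'"
    and F'_bound: "\<And>v. v \<in> cball udag \<rho> \<Longrightarrow> norm (F' v) \<le> L_F"
    and A'_bound: "\<And>v. v \<in> cball udag \<rho> \<Longrightarrow> norm (Ahat' v) \<le> L_A"
    and C_N_pos: "C_N > 0"
    and C_N_bound: "norm (Ahat udag - y) \<ge> C_N"
    and phi_nonneg: "\<And>k v z. \<phi> k v z \<ge> 0"
    and u_0: "u 0 = u0"
    and u_Suc: "\<And>k. u (Suc k) = u k - adjoint (blinfun_apply (F' (u k))) (F (u k) - y)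
                 - \<phi> k (u k) y *\<^sub>R adjoint (blinfun_apply (Ahat' (u k))) (Ahat (u k) - y)"
    and lam_bound1: "\<And>k. \<phi> k (u k) y * L_A * (L_A * \<rho> + norm (Ahat udag) + norm y) \<le> \<rho>"
    and lam_bound2: "\<And>k. \<phi> k (u k) y \<le> C0_lam * (norm (F (u k) - y))\<^sup>2"
    and const0: "1 - \<nu> - L_F\<^sup>2 - 2 * L_A * (L_A * \<rho> + norm (Ahat udag) + norm y) * C0_lam * \<rho> > 0"
    and u_lim: "u \<longlonglongrightarrow> ubar"
    and phi_cont: "\<And>k. continuous (at (u k, y)) (\<lambda>p. \<phi> k (fst p) (snd p))"
    and delta_pos: "\<And>n. \<delta> n > 0"
    and delta_lim: "\<delta> \<longlonglongrightarrow> 0"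
    and yn_close: "\<And>n. norm (yn n - y) \<le> \<delta> n"
    and ud_0: "\<And>n. ud n 0 = u0"
    and ud_Suc: "\<And>n k. ud n (Suc k) = ud n k
                 - adjoint (blinfun_apply (F' (ud n k))) (F (ud n k) - yn n)
                 - \<phi> k (ud n k) (yn n) *\<^sub>R adjoint (blinfun_apply (Ahat' (ud n k))) (Ahat (ud n k) - yn n)"
    and tau_pos: "\<tau> > 0"
    and C_tau: "1 - L_F\<^sup>2 - \<nu> - (1 + \<nu>) / \<tau> \<ge> 0"
    and C_lam_pos: "C_lam > 0"
    and noisy_lam1: "\<And>n k. k < kn n \<Longrightarrow>
          \<phi> k (ud n k) (yn n) * L_A * (L_A * \<rho> + norm (Ahat udag) + norm (yn n)) \<le> \<rho>"
    and noisy_lam2: "\<And>n k. k < kn n \<Longrightarrow>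
          \<phi> k (ud n k) (yn n) \<le> C_lam * (norm (F (ud n k) - yn n))\<^sup>2"
    and noisy_const: "\<And>n. (1 - L_F\<^sup>2 - \<nu> - (1 + \<nu>) / \<tau>)
          - 2 * L_A * (L_A * \<rho> + norm (Ahat udag) + norm (yn n)) * C_lam * \<rho> > 0"
    and stop: "\<And>n. norm (F (ud n (kn n)) - yn n) \<le> \<tau> * \<delta> n"
    and stop_first: "\<And>n k. k < kn n \<Longrightarrow> norm (F (ud n k) - yn n) > \<tau> * \<delta> n"
begin

abbreviation "B \<equiv> cball udag \<rho>"
definition CA :: "'b \<Rightarrow> real" where "CA z = L_A * \<rho> + norm (Ahat udag) + norm z"

lemma udag_in: "udag \<in> B" using rho_pos by simp

lemma LF_nn: "L_F \<ge> 0" using F'_bound[OF udag_in] norm_ge_zero order_trans by blast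
lemma LA_nn: "L_A \<ge> 0" using A'_bound[OF udag_in] norm_ge_zero order_trans by blast

lemma m_pos: "1 - \<nu> - L_F^2 > 0"
proof -
  have "(1 + \<nu>) / \<tau> > 0" using nu_pos tau_pos by simp
  then show ?thesis using C_tau by linarith
qed

lemma nu_lt1: "\<nu> < 1" using m_pos by (smt (verit) zero_le_power2)

lemma tau_gt1: "\<tau> > 1"
proof -
  have "L_F^2 \<ge> 0" by simp
  then have "(1 + \<nu>) / \<tau> \<le> 1" using C_tau nu_pos by linarith
  then have "1 + \<nu> \<le> \<tau>" using tau_pos by (simp add: field_simps)
  then show ?thesis using nu_pos by simp
qed

lemma CA_nn: "CA z \<ge> 0" unfolding CA_def using LA_nn rho_pos by simp

lemma F_cont: "continuous_on B F" by (rule has_derivative_continuous_on[OF F_deriv])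
lemma A_cont: "continuous_on B Ahat" by (rule has_derivative_continuous_on[OF A_deriv])

lemma A_bound: assumes "v \<in> B" shows "norm (Ahat v - z) \<le> CA z"
proof -
  have ob: "\<And>x. x \<in> B \<Longrightarrow> onorm (blinfun_apply (Ahat' x)) \<le> L_A"
    using A'_bound norm_blinfun.rep_eq by metis
  have "norm (Ahat v - Ahat udag) \<le> L_A * norm (v - udag)"
    by (rule differentiable_bound[OF convex_cball A_deriv ob assms udag_in])
  also have "\<dots> \<le> L_A * \<rho>" using assms LA_nn by (simp add: dist_norm norm_minus_commute mult_left_mono)
  finally have "norm (Ahat v - Ahat udag) \<le> L_A * \<rho>" .
  moreover have "norm (Ahat v - z) \<le> norm (Ahat v - Ahat udag) + norm (Ahat udag) + norm z"
  proof -
    have "norm (Ahat v - z) \<le> norm (Ahat v) + norm z" by (rule norm_triangle_ineq4)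
    moreover have "norm (Ahat v) \<le> norm (Ahat v - Ahat udag) + norm (Ahat udag)"
      using norm_triangle_sub[of "Ahat v" "Ahat udag"] by simp
    ultimately show ?thesis by linarith
  qed
  ultimately show ?thesis unfolding CA_def by linarith
qed

lemma F_lip: assumes "v \<in> B" "w \<in> B"
  shows "(1 - \<nu>) * norm (F v - F w) \<le> L_F * norm (v - w)"
proof -
  have "norm (F v - F w) \<le> norm (F v - F w - blinfun_apply (F' v) (v - w)) + norm (blinfun_apply (F' v) (v - w))"
    using norm_triangle_sub[of "F v - F w" "blinfun_apply (F' v) (v - w)"] by simp
  also have "\<dots> \<le> \<nu> * norm (F v - F w) + L_F * norm (v - w)"
    using tcc[OF assms] norm_blinfun[of "F' v" "v - w"] F'_bound[OF assms(1)]
    by (smt (verit, best) mult_right_mono norm_ge_zero)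
  finally show ?thesis by (simp add: algebra_simps)
qed

lemma step_core1:
  fixes v uh :: 'a and z :: 'b
  assumes v: "v \<in> B" and uh: "uh \<in> B" and Fuh: "F uh = y"
  shows "(norm (v - adjoint (blinfun_apply (F' v)) (F v - z) - uh))^2 \<le> (norm (v - uh))^2
           - (2 - 2*\<nu> - L_F^2) * (norm (F v - z))^2 + 2*(1+\<nu>)*norm (z - y)*norm (F v - z)"
proof -
  define r where "r = F v - z"
  define e where "e = v - uh"
  define a where "a = adjoint (blinfun_apply (F' v)) r"
  define \<eta> where "\<eta> = F v - F uh - blinfun_apply (F' v) e"
  define R where "R = norm r"
  define d where "d = norm (z - y)"
  define M where "M = norm (F v - F uh)"
  have R0: "R \<ge> 0" and d0: "d \<ge> 0" unfolding R_def d_def by auto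
  have w: "v - a - uh = e - a" unfolding e_def by simp
  have n1: "(norm (e - a))^2 = (norm e)^2 - 2*(e \<bullet> a) + (norm a)^2"
    by (simp add: power2_norm_eq_inner inner_diff_left inner_diff_right inner_commute)
  have ea: "e \<bullet> a = blinfun_apply (F' v) e \<bullet> r" unfolding a_def by (rule adj_inner)
  have na: "norm a \<le> L_F * R"
    unfolding a_def R_def using adj_norm[of "F' v" r] F'_bound[OF v]
    by (smt (verit) mult_right_mono norm_ge_zero)
  have na2: "(norm a)^2 \<le> L_F^2 * R^2"
    using power_mono[OF na norm_ge_zero, of 2] by (simp add: power_mult_distrib)
  have Te: "blinfun_apply (F' v) e = r + (z - y) - \<eta>" unfolding \<eta>_def r_def using Fuh by simp
  have eta: "norm \<eta> \<le> \<nu> * M" unfolding \<eta>_def M_def e_def using tcc[OF v uh] by simp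
  have M: "M \<le> R + d" unfolding M_def R_def d_def r_def using Fuh
    by (metis add_diff_cancel_left' diff_add_cancel norm_triangle_ineq diff_diff_eq2)
  have i1: "(z - y) \<bullet> r \<ge> - (d * R)" unfolding d_def R_def
    using Cauchy_Schwarz_ineq2[of "z - y" r] by linarith
  have i2: "\<eta> \<bullet> r \<le> \<nu> * R * R + \<nu> * d * R"
  proof -
    have "\<eta> \<bullet> r \<le> norm \<eta> * R" unfolding R_def by (rule norm_cauchy_schwarz)
    also have "\<dots> \<le> (\<nu> * M) * R" using eta R0 by (rule mult_right_mono)
    also have "\<dots> \<le> (\<nu> * (R + d)) * R" using M R0 nu_pos by (intro mult_right_mono mult_left_mono) auto
    finally show ?thesis by (simp add: algebra_simps)
  qed
  have rr: "r \<bullet> r = R^2" unfolding R_def by (simp add: power2_norm_eq_inner)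
  have "e \<bullet> a = R^2 + (z - y) \<bullet> r - \<eta> \<bullet> r" unfolding ea Te
    by (simp add: inner_diff_left inner_add_left rr)
  then have "e \<bullet> a \<ge> R^2 - d * R - (\<nu> * R * R + \<nu> * d * R)" using i1 i2 by linarith
  then have "(norm (e - a))^2 \<le> (norm e)^2 - 2 * (R^2 - d * R - (\<nu> * R * R + \<nu> * d * R)) + L_F^2 * R^2"
    using n1 na2 by (smt (verit))
  also have "\<dots> = (norm e)^2 - (2 - 2*\<nu> - L_F^2) * R^2 + 2*(1+\<nu>)*d*R"
    by (simp add: power2_eq_square algebra_simps)
  finally show ?thesis unfolding R_def d_def r_def[symmetric] a_def[symmetric] e_def[symmetric] w by simp
qed

lemma step_core2:
  fixes v uh :: 'a and z :: 'b and lam :: real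
  assumes v: "v \<in> B" and lam0: "lam \<ge> 0"
  shows "(norm (v - adjoint (blinfun_apply (F' v)) (F v - z) - lam *\<^sub>R adjoint (blinfun_apply (Ahat' v)) (Ahat v - z) - uh))^2
     \<le> (norm (v - adjoint (blinfun_apply (F' v)) (F v - z) - uh))^2
        + 2 * norm (v - adjoint (blinfun_apply (F' v)) (F v - z) - uh) * (lam * L_A * CA z) + (lam * L_A * CA z)^2"
proof -
  define w where "w = v - adjoint (blinfun_apply (F' v)) (F v - z) - uh"
  define b where "b = lam *\<^sub>R adjoint (blinfun_apply (Ahat' v)) (Ahat v - z)"
  define \<beta> where "\<beta> = lam * L_A * CA z"
  have eq: "v - adjoint (blinfun_apply (F' v)) (F v - z) - b - uh = w - b" unfolding w_def by simp
  have n1: "(norm (w - b))^2 = (norm w)^2 - 2*(w \<bullet> b) + (norm b)^2"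
    by (simp add: power2_norm_eq_inner inner_diff_left inner_diff_right inner_commute)
  have nb: "norm b \<le> \<beta>"
  proof -
    have "norm b = lam * norm (adjoint (blinfun_apply (Ahat' v)) (Ahat v - z))" unfolding b_def using lam0 by simp
    also have "\<dots> \<le> lam * (norm (Ahat' v) * norm (Ahat v - z))" using adj_norm lam0 by (rule mult_left_mono)
    also have "\<dots> \<le> lam * (L_A * CA z)" using A'_bound[OF v] A_bound[OF v, of z] lam0 LA_nn
      by (intro mult_left_mono mult_mono) auto
    finally show ?thesis unfolding \<beta>_def by simp
  qed
  have wb: "- (w \<bullet> b) \<le> norm w * \<beta>"
  proof -
    have "- (w \<bullet> b) \<le> norm w * norm b" using Cauchy_Schwarz_ineq2[of w b] by linarith
    also have "\<dots> \<le> norm w * \<beta>" using nb by (simp add: mult_left_mono)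
    finally show ?thesis .
  qed
  have nb2: "(norm b)^2 \<le> \<beta>^2" using power_mono[OF nb norm_ge_zero, of 2] .
  have fin: "(norm (w - b))^2 \<le> (norm w)^2 + 2 * norm w * \<beta> + \<beta>^2" 
  proof -
    have "2 * norm w * \<beta> = 2 * (norm w * \<beta>)" by simp
    then show ?thesis using n1 wb nb2 by linarith
  qed
  have key: "v - adjoint (blinfun_apply (F' v)) (F v - z) - lam *\<^sub>R adjoint (blinfun_apply (Ahat' v)) (Ahat v - z) - uh = w - b"
    unfolding w_def b_def by simp
  show ?thesis unfolding key w_def[symmetric] \<beta>_def[symmetric] by (rule fin)
qed

lemma norm_le_rho: "v \<in> B \<Longrightarrow> norm (v - udag) \<le> \<rho>"
  by (simp add: dist_norm norm_minus_commute)

lemma nf_step: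
  assumes uk: "u k \<in> B"
  shows "(norm (u (Suc k) - udag))^2 \<le> (norm (u k - udag))^2 - ((1-\<nu>-L_F^2)/2) * (norm (F (u k) - y))^2"
proof -
  define v where "v = u k"
  define lam where "lam = \<phi> k v y"
  define w where "w = v - adjoint (blinfun_apply (F' v)) (F v - y) - udag"
  define R2 where "R2 = (norm (F v - y))^2"
  define E where "E = norm (v - udag)"
  define \<beta> where "\<beta> = lam * L_A * CA y"
  define g0 where "g0 = L_A * CA y * C0_lam"
  define m where "m = 1 - \<nu> - L_F^2"
  have v: "v \<in> B" using uk v_def by simp
  have lam0: "lam \<ge> 0" unfolding lam_def by (rule phi_nonneg)
  have R20: "R2 \<ge> 0" unfolding R2_def by simp
  have mpos: "m > 0" unfolding m_def using m_pos by simp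
  have us: "u (Suc k) = v - adjoint (blinfun_apply (F' v)) (F v - y) - lam *\<^sub>R adjoint (blinfun_apply (Ahat' v)) (Ahat v - y)"
    unfolding v_def lam_def by (rule u_Suc)
  have c1: "(norm w)^2 \<le> E^2 - (2 - 2*\<nu> - L_F^2) * R2"
    using step_core1[OF v udag_in sol, of y] unfolding w_def E_def R2_def by simp
  have c2: "(norm (u (Suc k) - udag))^2 \<le> (norm w)^2 + 2 * norm w * \<beta> + \<beta>^2"
    using step_core2[OF v lam0, of y udag] unfolding us w_def \<beta>_def by simp
  have E: "E \<le> \<rho>" unfolding E_def using norm_le_rho[OF v] .
  have "2 - 2*\<nu> - L_F^2 \<ge> 0" using mpos unfolding m_def by (smt (verit) zero_le_power2)
  then have "(2 - 2*\<nu> - L_F^2) * R2 \<ge> 0" using R20 by simp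
  moreover have "E^2 \<le> \<rho>^2" using E unfolding E_def by (intro power_mono) auto
  ultimately have "(norm w)^2 \<le> \<rho>^2" using c1 by linarith
  then have nw: "norm w \<le> \<rho>" using power2_le_imp_le less_imp_le[OF rho_pos] by blast
  have b0: "\<beta> \<ge> 0" unfolding \<beta>_def using lam0 LA_nn CA_nn by simp
  have b1: "\<beta> \<le> \<rho>" unfolding \<beta>_def CA_def using lam_bound1[of k] v_def lam_def by simp
  have b2: "\<beta> \<le> g0 * R2"
  proof -
    have "lam \<le> C0_lam * R2" unfolding lam_def R2_def v_def by (rule lam_bound2)
    then have "lam * (L_A * CA y) \<le> (C0_lam * R2) * (L_A * CA y)"
      using LA_nn CA_nn by (intro mult_right_mono) auto
    then show ?thesis unfolding \<beta>_def g0_def by (simp add: algebra_simps)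
  qed
  have t1: "2 * norm w * \<beta> \<le> 2 * (\<rho> * \<beta>)" using nw b0 by (simp add: mult_right_mono)
  have t2: "\<beta>^2 \<le> \<rho> * \<beta>" using b1 b0 by (simp add: power2_eq_square mult_right_mono)
  have t3: "\<rho> * \<beta> \<le> (\<rho> * g0) * R2" using b2 rho_pos by (simp add: mult_left_mono mult.assoc)
  have g0b: "2 * (\<rho> * g0) < m" using const0 unfolding m_def g0_def CA_def by (simp add: algebra_simps)
  have t4: "(\<rho> * g0) * R2 \<le> (m/2) * R2" using g0b R20 by (intro mult_right_mono) auto
  have "(norm (u (Suc k) - udag))^2 \<le> E^2 - (2 - 2*\<nu> - L_F^2) * R2 + 3 * ((m/2) * R2)"
    using c1 c2 t1 t2 t3 t4 by linarith
  also have "\<dots> = E^2 - (m/2) * R2 - L_F^2 * R2" unfolding m_def by (simp add: field_simps algebra_simps)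
  also have "\<dots> \<le> E^2 - (m/2) * R2" using R20 by simp
  finally show ?thesis unfolding E_def m_def R2_def v_def .
qed

lemma nz_step:
  assumes kk: "k < kn n" and vB: "ud n k \<in> B" and uh: "uh \<in> B" and Fuh: "F uh = y"
  shows "norm (ud n (Suc k) - uh) \<le> norm (ud n k - uh)"
proof -
  define v where "v = ud n k"
  define z where "z = yn n"
  define lam where "lam = \<phi> k v z"
  define w where "w = v - adjoint (blinfun_apply (F' v)) (F v - z) - uh"
  define R where "R = norm (F v - z)"
  define d where "d = norm (z - y)"
  define E where "E = norm (v - uh)"
  define \<beta> where "\<beta> = lam * L_A * CA z"
  define \<gamma> where "\<gamma> = L_A * CA z * C_lam"
  define Ct where "Ct = 1 - L_F^2 - \<nu> - (1 + \<nu>) / \<tau>"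
  have v: "v \<in> B" using vB v_def by simp
  have lam0: "lam \<ge> 0" unfolding lam_def by (rule phi_nonneg)
  have R0: "R \<ge> 0" and d0: "d \<ge> 0" and E0: "E \<ge> 0" unfolding R_def d_def E_def by auto
  have Ct0: "Ct \<ge> 0" unfolding Ct_def using C_tau .
  have us: "ud n (Suc k) = v - adjoint (blinfun_apply (F' v)) (F v - z) - lam *\<^sub>R adjoint (blinfun_apply (Ahat' v)) (Ahat v - z)"
    unfolding v_def lam_def z_def by (rule ud_Suc)
  have c1: "(norm w)^2 \<le> E^2 - (2 - 2*\<nu> - L_F^2) * R^2 + 2*(1+\<nu>)*d*R"
    using step_core1[OF v uh Fuh, of z] unfolding w_def E_def R_def d_def by simp
  have c2: "(norm (ud n (Suc k) - uh))^2 \<le> (norm w)^2 + 2 * norm w * \<beta> + \<beta>^2"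
    using step_core2[OF v lam0, of z uh] unfolding us w_def \<beta>_def by simp
  have dd: "d \<le> \<delta> n" unfolding d_def z_def using yn_close by simp
  have tdR: "\<tau> * d < R" using stop_first[OF kk] dd tau_pos unfolding R_def v_def z_def
    by (smt (verit) mult_left_mono)
  have dR: "d * R \<le> R^2 / \<tau>"
  proof -
    have "(\<tau> * d) * R \<le> R * R" using tdR R0 by (intro mult_right_mono) auto
    then show ?thesis using tau_pos by (simp add: field_simps power2_eq_square)
  qed
  have "2*(1+\<nu>)*d*R = (2*(1+\<nu>)) * (d*R)" by simp
  also have "\<dots> \<le> (2*(1+\<nu>)) * (R^2/\<tau>)" using dR nu_pos by (intro mult_left_mono) auto
  finally have dR2: "2*(1+\<nu>)*d*R \<le> 2*((1+\<nu>)/\<tau>) * R^2" by simp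
  have Qe: "(2 - 2*\<nu> - L_F^2) * R^2 - 2*((1+\<nu>)/\<tau>) * R^2 = (2*Ct + L_F^2) * R^2"
    unfolding Ct_def by (simp add: algebra_simps)
  have W: "(norm w)^2 \<le> E^2 - (2*Ct + L_F^2) * R^2" using c1 dR2 Qe by linarith
  have "(2*Ct + L_F^2) * R^2 \<ge> 0" using Ct0 by simp
  then have "(norm w)^2 \<le> E^2" using W by linarith
  then have nw: "norm w \<le> E" using power2_le_imp_le E0 by blast
  have E2: "E \<le> 2 * \<rho>"
  proof -
    have "E \<le> norm (v - udag) + norm (uh - udag)" unfolding E_def
      using norm_triangle_ineq4[of "v - udag" "uh - udag"] by simp
    then show ?thesis using norm_le_rho[OF v] norm_le_rho[OF uh] by linarith
  qed
  have b0: "\<beta> \<ge> 0" unfolding \<beta>_def using lam0 LA_nn CA_nn by simp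
  have b2: "\<beta> \<le> \<gamma> * R^2"
  proof -
    have "lam \<le> C_lam * R^2" unfolding lam_def R_def v_def z_def using noisy_lam2[OF kk] .
    then have "lam * (L_A * CA z) \<le> (C_lam * R^2) * (L_A * CA z)"
      using LA_nn CA_nn by (intro mult_right_mono) auto
    then show ?thesis unfolding \<beta>_def \<gamma>_def by (simp add: algebra_simps)
  qed
  have gb: "2 * \<rho> * \<gamma> < Ct" using noisy_const[of n] unfolding Ct_def \<gamma>_def CA_def z_def
    by (simp add: algebra_simps)
  have bL: "\<beta> \<le> L_F * R"
  proof (cases "\<gamma> \<le> 0")
    case True
    then have "\<gamma> * R^2 \<le> 0" by (simp add: mult_nonpos_nonneg)
    then show ?thesis using b2 LF_nn R0 by (smt (verit) mult_nonneg_nonneg)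
  next
    case False
    then have g0: "\<gamma> > 0" by simp
    define M where "M = norm (F v - F uh)"
    have RM: "R \<le> M + d" unfolding R_def M_def d_def using norm_triangle_ineq4[of "F v - F uh" "z - y"] Fuh
      by (simp add: algebra_simps)
    have Mb: "(1 - \<nu>) * M \<le> L_F * (2 * \<rho>)"
    proof -
      have "(1 - \<nu>) * M \<le> L_F * E" unfolding M_def E_def by (rule F_lip[OF v uh])
      also have "\<dots> \<le> L_F * (2 * \<rho>)" using E2 LF_nn by (rule mult_left_mono)
      finally show ?thesis .
    qed
    define K where "K = (1 - \<nu>) * (1 - 1/\<tau>)"
    have K0: "K > 0" unfolding K_def using nu_lt1 tau_gt1 by simp
    have dRt: "d \<le> R / \<tau>" using tdR tau_pos by (simp add: field_simps)
    have "R - R/\<tau> \<le> M" using RM dRt by linarith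
    then have "(1 - \<nu>) * (R - R/\<tau>) \<le> (1 - \<nu>) * M" using nu_lt1 by (intro mult_left_mono) auto
    moreover have "(1 - \<nu>) * (R - R/\<tau>) = K * R" unfolding K_def by (simp add: algebra_simps)
    moreover have "L_F * (2 * \<rho>) = 2 * \<rho> * L_F" by simp
    ultimately have KR: "K * R \<le> 2 * \<rho> * L_F" using Mb by linarith
    have CtK: "Ct \<le> K"
    proof -
      have "K - Ct = L_F^2 + 2 * (\<nu> / \<tau>)" unfolding K_def Ct_def using tau_pos by (simp add: field_simps)
      moreover have "\<nu> / \<tau> \<ge> 0" using nu_pos tau_pos by simp
      ultimately show ?thesis by (smt (verit) zero_le_power2)
    qed
    have "K * (\<gamma> * R) = \<gamma> * (K * R)" by simp
    also have "\<dots> \<le> \<gamma> * (2 * \<rho> * L_F)" using KR g0 by (intro mult_left_mono) auto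
    also have "\<dots> = (2 * \<rho> * \<gamma>) * L_F" by simp
    also have "\<dots> \<le> Ct * L_F" using gb LF_nn by (intro mult_right_mono) auto
    also have "\<dots> \<le> K * L_F" using CtK LF_nn by (intro mult_right_mono) auto
    finally have "\<gamma> * R \<le> L_F" using K0 by simp
    then have "(\<gamma> * R) * R \<le> L_F * R" using R0 by (rule mult_right_mono)
    then show ?thesis using b2 by (simp add: power2_eq_square mult.assoc)
  qed
  have t1: "2 * norm w * \<beta> \<le> 4 * (\<rho> * \<beta>)"
  proof -
    have "norm w * \<beta> \<le> (2 * \<rho>) * \<beta>" using nw E2 b0 by (intro mult_right_mono) auto
    then show ?thesis by (simp add: algebra_simps)
  qed
  have t2: "\<rho> * \<beta> \<le> (\<rho> * \<gamma>) * R^2" using b2 rho_pos by (simp add: mult_left_mono mult.assoc)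
  have t3: "\<beta>^2 \<le> L_F^2 * R^2" using power_mono[OF bL b0, of 2] by (simp add: power_mult_distrib)
  have t4: "(4 * (\<rho> * \<gamma>)) * R^2 \<le> (2 * Ct) * R^2" using gb by (intro mult_right_mono) (auto simp: algebra_simps)
  have "(norm (ud n (Suc k) - uh))^2 \<le> E^2 - (2*Ct + L_F^2) * R^2 + 4 * ((\<rho> * \<gamma>) * R^2) + L_F^2 * R^2"
    using c2 W t1 t2 t3 by linarith
  also have "\<dots> = E^2 - (2 * Ct) * R^2 + (4 * (\<rho> * \<gamma>)) * R^2" by (simp add: algebra_simps)
  also have "\<dots> \<le> E^2" using t4 by linarith
  finally have "(norm (ud n (Suc k) - uh))^2 \<le> E^2" .
  then show ?thesis unfolding E_def v_def using power2_le_imp_le norm_ge_zero by blast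
qed

lemma u_in: "u k \<in> B"
proof (induction k)
  case 0 then show ?case using u0_in u_0 by simp
next
  case (Suc k)
  have "(norm (u (Suc k) - udag))^2 \<le> (norm (u k - udag))^2 - ((1-\<nu>-L_F^2)/2) * (norm (F (u k) - y))^2"
    by (rule nf_step[OF Suc])
  moreover have "((1-\<nu>-L_F^2)/2) * (norm (F (u k) - y))^2 \<ge> 0" using m_pos by simp
  moreover have "(norm (u k - udag))^2 \<le> \<rho>^2" using norm_le_rho[OF Suc] by (intro power_mono) auto
  ultimately have "(norm (u (Suc k) - udag))^2 \<le> \<rho>^2" by linarith
  then have "norm (u (Suc k) - udag) \<le> \<rho>" using power2_le_imp_le less_imp_le[OF rho_pos] by blast
  then show ?case by (simp add: dist_norm norm_minus_commute)
qed

lemma u_sum: "(norm (u N - udag))^2 \<le> (norm (u 0 - udag))^2 - ((1-\<nu>-L_F^2)/2) * (\<Sum>k<N. (norm (F (u k) - y))^2)"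
proof (induction N)
  case 0 then show ?case by simp
next
  case (Suc N)
  have "(norm (u (Suc N) - udag))^2 \<le> (norm (u N - udag))^2 - ((1-\<nu>-L_F^2)/2) * (norm (F (u N) - y))^2"
    by (rule nf_step[OF u_in])
  then show ?case using Suc by (simp add: algebra_simps)
qed

lemma res_lim: "(\<lambda>k. F (u k)) \<longlonglongrightarrow> y"
proof -
  define c where "c = (1-\<nu>-L_F^2)/2"
  have c0: "c > 0" unfolding c_def using m_pos by simp
  have bnd: "(\<Sum>k<N. (norm (F (u k) - y))^2) \<le> (norm (u 0 - udag))^2 / c" for N
  proof -
    have "c * (\<Sum>k<N. (norm (F (u k) - y))^2) \<le> (norm (u 0 - udag))^2"
      using u_sum[of N] unfolding c_def by (smt (verit) zero_le_power2)
    then show ?thesis using c0 by (simp add: field_simps)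
  qed
  have "summable (\<lambda>k. (norm (F (u k) - y))^2)"
    by (rule summableI_nonneg_bounded[OF _ bnd]) simp
  then have "(\<lambda>k. (norm (F (u k) - y))^2) \<longlonglongrightarrow> 0" by (rule summable_LIMSEQ_zero)
  then have "(\<lambda>k. sqrt ((norm (F (u k) - y))^2)) \<longlonglongrightarrow> sqrt 0" by (rule tendsto_real_sqrt)
  then have "(\<lambda>k. norm (F (u k) - y)) \<longlonglongrightarrow> 0" by simp
  then have "(\<lambda>k. F (u k) - y) \<longlonglongrightarrow> 0" by (simp add: tendsto_norm_zero_iff)
  then show ?thesis by (rule LIM_zero_cancel)
qed

lemma ubar_in: "ubar \<in> B"
  by (rule Lim_in_closed_set[OF closed_cball _ _ u_lim]) (rule always_eventually, rule allI, rule u_in, simp)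

lemma F_ubar: "F ubar = y"
proof -
  have "(\<lambda>k. F (u k)) \<longlonglongrightarrow> F ubar"
    by (rule continuous_on_tendsto_compose[OF F_cont u_lim ubar_in]) (rule always_eventually, rule allI, rule u_in)
  then show ?thesis using res_lim LIMSEQ_unique by blast
qed

lemma ud_in: "k \<le> kn n \<Longrightarrow> ud n k \<in> B"
proof (induction k)
  case 0 then show ?case using u0_in ud_0 by simp
next
  case (Suc k)
  then have kk: "k < kn n" by simp
  have "norm (ud n (Suc k) - udag) \<le> norm (ud n k - udag)"
    by (rule nz_step[OF kk Suc.IH[OF less_imp_le[OF kk]] udag_in sol])
  also have "\<dots> \<le> \<rho>" using norm_le_rho Suc.IH kk by simp
  finally show ?case by (simp add: dist_norm norm_minus_commute)
qed

lemma ud_mono: "j \<le> k \<Longrightarrow> k \<le> kn n \<Longrightarrow> norm (ud n k - ubar) \<le> norm (ud n j - ubar)"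
proof (induction k)
  case 0 then show ?case by simp
next
  case (Suc k)
  show ?case
  proof (cases "j = Suc k")
    case True then show ?thesis by simp
  next
    case False
    then have jk: "j \<le> k" and kk: "k < kn n" using Suc.prems by auto
    have "norm (ud n (Suc k) - ubar) \<le> norm (ud n k - ubar)"
      by (rule nz_step[OF kk ud_in ubar_in F_ubar]) (use kk in simp)
    also have "\<dots> \<le> norm (ud n j - ubar)" using Suc.IH jk kk by simp
    finally show ?thesis .
  qed
qed

lemma yn_lim: "yn \<longlonglongrightarrow> y"
proof -
  have "(\<lambda>n. yn n - y) \<longlonglongrightarrow> 0"
    by (rule Lim_null_comparison[OF _ delta_lim]) (simp add: yn_close)
  then show ?thesis by (rule LIM_zero_cancel)
qed

lemma stab:
  assumes G: "G \<le> sequentially" and ev: "eventually (\<lambda>n. k \<le> kn n) G"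
  shows "((\<lambda>n. ud n k) \<longlongrightarrow> u k) G"
  using ev
proof (induction k)
  case 0 then show ?case using ud_0 u_0 by simp
next
  case (Suc k)
  have evk: "eventually (\<lambda>n. k \<le> kn n) G" using Suc.prems by (rule eventually_mono) simp
  have IH: "((\<lambda>n. ud n k) \<longlongrightarrow> u k) G" by (rule Suc.IH[OF evk])
  have evB: "eventually (\<lambda>n. ud n k \<in> B) G" using evk by (rule eventually_mono) (rule ud_in)
  have yG: "(yn \<longlongrightarrow> y) G" using tendsto_mono[OF G yn_lim] .
  have tF: "((\<lambda>n. F (ud n k)) \<longlongrightarrow> F (u k)) G"
    by (rule continuous_on_tendsto_compose[OF F_cont IH u_in evB])
  have tA: "((\<lambda>n. Ahat (ud n k)) \<longlongrightarrow> Ahat (u k)) G"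
    by (rule continuous_on_tendsto_compose[OF A_cont IH u_in evB])
  have tF': "((\<lambda>n. F' (ud n k)) \<longlongrightarrow> F' (u k)) G"
    by (rule continuous_on_tendsto_compose[OF F'_cont IH u_in evB])
  have tA': "((\<lambda>n. Ahat' (ud n k)) \<longlongrightarrow> Ahat' (u k)) G"
    by (rule continuous_on_tendsto_compose[OF A'_cont IH u_in evB])
  have tphi: "((\<lambda>n. \<phi> k (ud n k) (yn n)) \<longlongrightarrow> \<phi> k (u k) y) G"
    using isCont_tendsto_compose[OF phi_cont[of k] tendsto_Pair[OF IH yG]] by simp
  have adjt: "((\<lambda>n. adjoint (blinfun_apply (T n)) (r n)) \<longlongrightarrow> adjoint (blinfun_apply T0) r0) G"
    if "(T \<longlongrightarrow> T0) G" "(r \<longlongrightarrow> r0) G"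
    for T :: "nat \<Rightarrow> 'a \<Rightarrow>\<^sub>L 'b" and T0 r r0
    using bounded_bilinear.tendsto[OF adj_bilinear that] by simp
  have "((\<lambda>n. ud n k - adjoint (blinfun_apply (F' (ud n k))) (F (ud n k) - yn n)
                 - \<phi> k (ud n k) (yn n) *\<^sub>R adjoint (blinfun_apply (Ahat' (ud n k))) (Ahat (ud n k) - yn n))
        \<longlongrightarrow> u k - adjoint (blinfun_apply (F' (u k))) (F (u k) - y)
                 - \<phi> k (u k) y *\<^sub>R adjoint (blinfun_apply (Ahat' (u k))) (Ahat (u k) - y)) G"
    by (intro tendsto_diff tendsto_scaleR IH tphi adjt tF' tA' tF tA yG)
  then show ?case unfolding ud_Suc u_Suc .
qed

lemma adj_zero: "adjoint (blinfun_apply (T::'a \<Rightarrow>\<^sub>L 'b)) 0 = 0"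
  by (rule vec_eq_inner) (simp add: adj_inner)

lemma u_const: assumes "F (u j) = y" shows "u (i + j) = u j"
proof (induction i)
  case 0 then show ?case by simp
next
  case (Suc i)
  have Fi: "F (u (i + j)) = y" using Suc assms by simp
  have "\<phi> (i + j) (u (i + j)) y \<le> C0_lam * (norm (F (u (i + j)) - y))^2" by (rule lam_bound2)
  then have "\<phi> (i + j) (u (i + j)) y = 0" using Fi phi_nonneg[of "i + j" "u (i + j)" y] by simp
  then have "u (Suc (i + j)) = u (i + j)" using u_Suc[of "i + j"] Fi by (simp add: adj_zero)
  then show ?case using Suc by simp
qed

lemma u_sol_lim: assumes "F (u j) = y" shows "u j = ubar"
proof -
  have "(\<lambda>i. u (i + j)) \<longlonglongrightarrow> ubar" using LIMSEQ_ignore_initial_segment[OF u_lim, of j] .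
  moreover have "(\<lambda>i. u (i + j)) \<longlonglongrightarrow> u j" using u_const[OF assms] by simp
  ultimately show ?thesis using LIMSEQ_unique by blast
qed

lemma main_result: "(\<lambda>n. ud n (kn n)) \<longlonglongrightarrow> ubar"
  unfolding tendsto_iff
proof (intro allI impI)
  fix \<epsilon> :: real assume e: "\<epsilon> > 0"
  then have e2: "\<epsilon> / 2 > 0" by simp
  from u_lim[unfolded tendsto_iff, rule_format, OF e2] obtain K where K: "dist (u K) ubar < \<epsilon> / 2"
    unfolding eventually_sequentially by blast
  define GK where "GK = inf sequentially (principal {n. K \<le> kn n})"
  have GKle: "GK \<le> sequentially" unfolding GK_def by simp
  have evK: "eventually (\<lambda>n. K \<le> kn n) GK" unfolding GK_def eventually_inf_principal by simp
  have "((\<lambda>n. ud n K) \<longlongrightarrow> u K) GK" by (rule stab[OF GKle evK])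
  then have "eventually (\<lambda>n. dist (ud n K) (u K) < \<epsilon> / 2) GK"
    using tendsto_iff[THEN iffD1, rule_format, OF _ e2] by blast
  then have A: "eventually (\<lambda>n. K \<le> kn n \<longrightarrow> dist (ud n K) (u K) < \<epsilon> / 2) sequentially"
    unfolding GK_def eventually_inf_principal by simp
  have B: "eventually (\<lambda>n. kn n = j \<longrightarrow> dist (ud n j) ubar < \<epsilon>) sequentially" for j
  proof -
    define G where "G = inf sequentially (principal {n. kn n = j})"
    have Gle: "G \<le> sequentially" unfolding G_def by simp
    have "eventually (\<lambda>n. dist (ud n j) ubar < \<epsilon>) G"
    proof (cases "G = bot")
      case True then show ?thesis by simp
    next
      case False
      have evj: "eventually (\<lambda>n. j \<le> kn n) G" unfolding G_def eventually_inf_principal by simp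
      have tj: "((\<lambda>n. ud n j) \<longlongrightarrow> u j) G" by (rule stab[OF Gle evj])
      have evB: "eventually (\<lambda>n. ud n j \<in> B) G" using evj by (rule eventually_mono) (rule ud_in)
      have t1: "((\<lambda>n. F (ud n j) - yn n) \<longlongrightarrow> F (u j) - y) G"
        by (intro tendsto_diff continuous_on_tendsto_compose[OF F_cont tj u_in evB] tendsto_mono[OF Gle yn_lim])
      have td: "((\<lambda>n. \<tau> * \<delta> n) \<longlongrightarrow> 0) G"
        using tendsto_mono[OF Gle tendsto_mult[OF tendsto_const delta_lim, of \<tau>]] by simp
      have evs: "eventually (\<lambda>n. norm (F (ud n j) - yn n) \<le> \<tau> * \<delta> n) G"
        unfolding G_def eventually_inf_principal using stop by (intro always_eventually) auto
      have t2: "((\<lambda>n. F (ud n j) - yn n) \<longlongrightarrow> 0) G" by (rule Lim_null_comparison[OF evs td])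
      have "F (u j) - y = 0" using tendsto_unique[OF False t1 t2] .
      then have "u j = ubar" using u_sol_lim by simp
      then have "((\<lambda>n. ud n j) \<longlongrightarrow> ubar) G" using tj by simp
      then show ?thesis using tendsto_iff[THEN iffD1, rule_format, OF _ e] by blast
    qed
    then show ?thesis unfolding G_def eventually_inf_principal by simp
  qed
  have B': "eventually (\<lambda>n. \<forall>j\<in>{..<K}. kn n = j \<longrightarrow> dist (ud n j) ubar < \<epsilon>) sequentially"
    by (rule eventually_ball_finite) (use B in auto)
  show "eventually (\<lambda>n. dist (ud n (kn n)) ubar < \<epsilon>) sequentially"
    using A B'
  proof eventually_elim
    case (elim n)
    show ?case
    proof (cases "K \<le> kn n")
      case True
      have "dist (ud n (kn n)) ubar = norm (ud n (kn n) - ubar)" by (simp add: dist_norm)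
      also have "\<dots> \<le> norm (ud n K - ubar)" by (rule ud_mono[OF True order_refl])
      also have "\<dots> \<le> dist (ud n K) (u K) + dist (u K) ubar"
        using dist_triangle[of "ud n K" ubar "u K"] by (simp add: dist_norm)
      also have "\<dots> < \<epsilon>" using elim(1) True K by simp
      finally show ?thesis .
    next
      case False
      then show ?thesis using elim(2) by auto
    qed
  qed
qed

end

theorem mainTheorem5:
  fixes F Ahat :: "'a::{real_inner,complete_space} \<Rightarrow> 'b::{real_inner,complete_space}"
    and F' Ahat' :: "'a \<Rightarrow> ('a \<Rightarrow>\<^sub>L 'b)"
    and y :: 'b and udag u0 ubar :: 'a
    and \<rho> \<nu> L_F L_A C_N C0_lam :: real
    and \<phi> :: "nat \<Rightarrow> 'a \<Rightarrow> 'b \<Rightarrow> real"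
    and u :: "nat \<Rightarrow> 'a"
    and \<delta> :: "nat \<Rightarrow> real" and yn :: "nat \<Rightarrow> 'b"
    and ud :: "nat \<Rightarrow> nat \<Rightarrow> 'a"
    and kn :: "nat \<Rightarrow> nat"
    and \<tau> C_lam :: real
  assumes sol: "F udag = y"
    and rho_pos: "\<rho> > 0"
    and balls: "cball udag \<rho> \<subseteq> cball u0 (2 * \<rho>)"
    and u0_in: "u0 \<in> cball udag \<rho>"
    and nu_pos: "\<nu> > 0"
    and tcc: "\<And>v w. v \<in> cball udag \<rho> \<Longrightarrow> w \<in> cball udag \<rho> \<Longrightarrow>
               norm (F v - F w - blinfun_apply (F' v) (v - w)) \<le> \<nu> * norm (F v - F w)"
    and F_deriv: "\<And>v. v \<in> cball udag \<rho> \<Longrightarrow>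
               (F has_derivative blinfun_apply (F' v)) (at v within cball udag \<rho>)"
    and A_deriv: "\<And>v. v \<in> cball udag \<rho> \<Longrightarrow>
               (Ahat has_derivative blinfun_apply (Ahat' v)) (at v within cball udag \<rho>)"
    and F'_cont: "continuous_on (cball udag \<rho>) F'"
    and A'_cont: "continuous_on (cball udag \<rho>) Ahat'"
    and F'_bound: "\<And>v. v \<in> cball udag \<rho> \<Longrightarrow> norm (F' v) \<le> L_F"
    and A'_bound: "\<And>v. v \<in> cball udag \<rho> \<Longrightarrow> norm (Ahat' v) \<le> L_A"
    and C_N_pos: "C_N > 0"
    and C_N_bound: "norm (Ahat udag - y) \<ge> C_N"
    and phi_nonneg: "\<And>k v z. \<phi> k v z \<ge> 0"
    and u_0: "u 0 = u0"
    and u_Suc: "\<And>k. u (Suc k) = u k - adjoint (blinfun_apply (F' (u k))) (F (u k) - y)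
                 - \<phi> k (u k) y *\<^sub>R adjoint (blinfun_apply (Ahat' (u k))) (Ahat (u k) - y)"
    and lam_bound1: "\<And>k. \<phi> k (u k) y * L_A * (L_A * \<rho> + norm (Ahat udag) + norm y) \<le> \<rho>"
    and lam_bound2: "\<And>k. \<phi> k (u k) y \<le> C0_lam * (norm (F (u k) - y))\<^sup>2"
    and const0: "1 - \<nu> - L_F\<^sup>2 - 2 * L_A * (L_A * \<rho> + norm (Ahat udag) + norm y) * C0_lam * \<rho> > 0"
    and u_lim: "u \<longlonglongrightarrow> ubar"
    and phi_cont: "\<And>k. continuous (at (u k, y)) (\<lambda>p. \<phi> k (fst p) (snd p))"
    and delta_pos: "\<And>n. \<delta> n > 0"
    and delta_lim: "\<delta> \<longlonglongrightarrow> 0"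
    and yn_close: "\<And>n. norm (yn n - y) \<le> \<delta> n"
    and ud_0: "\<And>n. ud n 0 = u0"
    and ud_Suc: "\<And>n k. ud n (Suc k) = ud n k
                 - adjoint (blinfun_apply (F' (ud n k))) (F (ud n k) - yn n)
                 - \<phi> k (ud n k) (yn n) *\<^sub>R adjoint (blinfun_apply (Ahat' (ud n k))) (Ahat (ud n k) - yn n)"
    and tau_pos: "\<tau> > 0"
    and C_tau: "1 - L_F\<^sup>2 - \<nu> - (1 + \<nu>) / \<tau> \<ge> 0"
    and C_lam_pos: "C_lam > 0"
    and noisy_lam1: "\<And>n k. k < kn n \<Longrightarrow>
          \<phi> k (ud n k) (yn n) * L_A * (L_A * \<rho> + norm (Ahat udag) + norm (yn n)) \<le> \<rho>"
    and noisy_lam2: "\<And>n k. k < kn n \<Longrightarrow>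
          \<phi> k (ud n k) (yn n) \<le> C_lam * (norm (F (ud n k) - yn n))\<^sup>2"
    and noisy_const: "\<And>n. (1 - L_F\<^sup>2 - \<nu> - (1 + \<nu>) / \<tau>)
          - 2 * L_A * (L_A * \<rho> + norm (Ahat udag) + norm (yn n)) * C_lam * \<rho> > 0"
    and stop: "\<And>n. norm (F (ud n (kn n)) - yn n) \<le> \<tau> * \<delta> n"
    and stop_first: "\<And>n k. k < kn n \<Longrightarrow> norm (F (ud n k) - yn n) > \<tau> * \<delta> n"
  shows "(\<lambda>n. ud n (kn n)) \<longlonglongrightarrow> ubar"
proof -
  interpret setting F Ahat F' Ahat' y udag u0 ubar \<rho> \<nu> L_F L_A C_N C0_lam \<phi> u \<delta> yn ud kn \<tau> C_lam
    by (unfold_locales; fact assms)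
  show ?thesis by (rule main_result)
qed

end
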